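(* Suppose that for every $c\in\{1,\dots,K-1\}$, $$\bar p_c(\bm x,\bar Y)=\binom{K-1}{c}^{-1}\sum_{y\notin \bar Y}p(\bm x,y)\qquad(\bm x\in\mathcal X,\ \bar Y\in\overline{\mathcal Y}_c).$$ Let $\gamma\in[0,1]$ and let $\bm\alpha$ satisfy $\alpha_c\ge0$, $\sum_{c=1}^{K-1}\alpha_c=1$. Define the multi-complementary and unlabeled risk $R_{\mathrm{MCUL}}(\bm g)=\sum_{c=1}^{K-1}\alpha_c R^u_c(\bm g)$, where $$R^u_c(\bm g)=\mathbb E_{\bar p_c(\bm x,\bar Y)}\Big[(1-\gamma)\mathcal L(\bm g(\bm x))-\frac{K-1}{c}\sum_{y\in\bar Y}\ell(\bm g(\bm x),y)\Big]+\gamma\,\mathbb E_{p(\bm x)}\big[\mathcal L(\bm g(\bm x))\big].$$ Then for any loss $\ell$ and decision function $\bm g$ (with finite expectations), $R_{\mathrm{MCUL}}(\bm g)=R(\bm g)$.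
   Context: Let $K\ge 2$, $\mathcal X\subseteq\mathbb R^d$ the feature space and $\mathcal Y=\{1,\dots,K\}$ the label space. Let $p(\bm x,y)$ be a joint density on $\mathcal X\times\mathcal Y$ with marginal density $p(\bm x)$. For $c\in\{1,\dots,K-1\}$, $\overline{\mathcal Y}_c$ denotes the collection of all $c$-element subsets of $\{1,\dots,K\}$, and $\bar p_c(\bm x,\bar Y)$ is a density on $\mathcal X\times\overline{\mathcal Y}_c$. A decision function is a map $\bm g:\mathcal X\to\mathbb R^K$, a loss is a function $\ell:\mathbb R^K\times\mathcal Y\to[0,\infty)$, the classification risk is $R(\bm g)=\mathbb E_{p(\bm x,y)}[\ell(\bm g(\bm x),y)]$, and the cumulative loss is $\mathcal L(\bm g(\bm x))=\sum_{y=1}^K\ell(\bm g(\bm x),y)$. *)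

theory Defs
  imports "HOL-Analysis.Analysis"
begin

definition labels :: "nat \<Rightarrow> nat set" where
  "labels K = {1..K}"

definition compl_sets :: "nat \<Rightarrow> nat \<Rightarrow> nat set set" where
  "compl_sets K c = {Y. Y \<subseteq> {1..K} \<and> card Y = c}"

definition cum_loss :: "nat \<Rightarrow> ('v \<Rightarrow> nat \<Rightarrow> real) \<Rightarrow> 'v \<Rightarrow> real" where
  "cum_loss K l v = (\<Sum>y\<in>{1..K}. l v y)"

definition marginal :: "nat \<Rightarrow> ('a \<Rightarrow> nat \<Rightarrow> real) \<Rightarrow> 'a \<Rightarrow> real" where
  "marginal K p x = (\<Sum>y\<in>{1..K}. p x y)"

definition exp_joint :: "'a::euclidean_space set \<Rightarrow> nat \<Rightarrow> ('a \<Rightarrow> nat \<Rightarrow> real)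
    \<Rightarrow> ('a \<Rightarrow> nat \<Rightarrow> real) \<Rightarrow> real" where
  "exp_joint X K p f = (\<Sum>y\<in>{1..K}. LINT x:X|lborel. p x y * f x y)"

definition exp_compl :: "'a::euclidean_space set \<Rightarrow> nat \<Rightarrow> nat \<Rightarrow> ('a \<Rightarrow> nat set \<Rightarrow> real)
    \<Rightarrow> ('a \<Rightarrow> nat set \<Rightarrow> real) \<Rightarrow> real" where
  "exp_compl X K c pb f = (\<Sum>Y\<in>compl_sets K c. LINT x:X|lborel. pb x Y * f x Y)"

definition exp_marg :: "'a::euclidean_space set \<Rightarrow> nat \<Rightarrow> ('a \<Rightarrow> nat \<Rightarrow> real)
    \<Rightarrow> ('a \<Rightarrow> real) \<Rightarrow> real" where
  "exp_marg X K p f = (LINT x:X|lborel. marginal K p x * f x)"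

definition class_risk :: "'a::euclidean_space set \<Rightarrow> nat \<Rightarrow> ('a \<Rightarrow> nat \<Rightarrow> real)
    \<Rightarrow> ('v \<Rightarrow> nat \<Rightarrow> real) \<Rightarrow> ('a \<Rightarrow> 'v) \<Rightarrow> real" where
  "class_risk X K p l g = exp_joint X K p (\<lambda>x y. l (g x) y)"

definition risk_u :: "'a::euclidean_space set \<Rightarrow> nat \<Rightarrow> ('a \<Rightarrow> nat \<Rightarrow> real)
    \<Rightarrow> (nat \<Rightarrow> 'a \<Rightarrow> nat set \<Rightarrow> real) \<Rightarrow> real
    \<Rightarrow> ('v \<Rightarrow> nat \<Rightarrow> real) \<Rightarrow> ('a \<Rightarrow> 'v) \<Rightarrow> nat \<Rightarrow> real" where
  "risk_u X K p pbar \<gamma> l g c =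
     exp_compl X K c (pbar c)
       (\<lambda>x Y. (1 - \<gamma>) * cum_loss K l (g x) - (real (K - 1) / real c) * (\<Sum>y\<in>Y. l (g x) y))
     + \<gamma> * exp_marg X K p (\<lambda>x. cum_loss K l (g x))"

definition risk_MCUL :: "'a::euclidean_space set \<Rightarrow> nat \<Rightarrow> ('a \<Rightarrow> nat \<Rightarrow> real)
    \<Rightarrow> (nat \<Rightarrow> 'a \<Rightarrow> nat set \<Rightarrow> real) \<Rightarrow> real \<Rightarrow> (nat \<Rightarrow> real)
    \<Rightarrow> ('v \<Rightarrow> nat \<Rightarrow> real) \<Rightarrow> ('a \<Rightarrow> 'v) \<Rightarrow> real" where
  "risk_MCUL X K p pbar \<gamma> \<alpha> l g = (\<Sum>c\<in>{1..K-1}. \<alpha> c * risk_u X K p pbar \<gamma> l g c)"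

end

theory Submission imports Defs begin

lemma set_integral_sum_gen:
  fixes f :: "'i \<Rightarrow> 'a \<Rightarrow> real"
  assumes "finite I" "\<And>i. i \<in> I \<Longrightarrow> set_integrable M A (f i)"
  shows "set_integrable M A (\<lambda>x. \<Sum>i\<in>I. f i x) \<and> (LINT x:A|M. (\<Sum>i\<in>I. f i x)) = (\<Sum>i\<in>I. LINT x:A|M. f i x)"
  using assms
proof (induction I rule: finite_induct)
  case empty
  then show ?case by (simp add: set_integrable_def set_lebesgue_integral_def)
next
  case (insert a F)
  then have h: "set_integrable M A (\<lambda>x. \<Sum>i\<in>F. f i x)" "(LINT x:A|M. (\<Sum>i\<in>F. f i x)) = (\<Sum>i\<in>F. LINT x:A|M. f i x)"
    and ha: "set_integrable M A (f a)" by auto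
  show ?case using insert(1,2) set_integral_add[OF ha h(1)] h(2) by simp
qed

lemma count1:
  assumes "y' \<in> {1..K}"
  shows "card (compl_sets K c \<inter> {Y. y' \<notin> Y}) = (K - 1 choose c)"
proof -
  have "compl_sets K c \<inter> {Y. y' \<notin> Y} = {Y. Y \<subseteq> {1..K} - {y'} \<and> card Y = c}"
    unfolding compl_sets_def by auto
  moreover have "card ({1..K} - {y'}) = K - 1" using assms by simp
  ultimately show ?thesis using n_subsets[of "{1..K} - {y'}" c] by simp
qed

lemma count2:
  assumes "y' \<in> {1..K}" "y \<in> {1..K}" "y \<noteq> y'"
  shows "card (compl_sets K c \<inter> {Y. y' \<notin> Y \<and> y \<notin> Y}) = (K - 2 choose c)"
proof -
  have "compl_sets K c \<inter> {Y. y' \<notin> Y \<and> y \<notin> Y} = {Y. Y \<subseteq> {1..K} - {y,y'} \<and> card Y = c}"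
    unfolding compl_sets_def by auto
  moreover have "card ({1..K} - {y,y'}) = K - 2" using assms by (simp add: card_Diff_subset)
  ultimately show ?thesis using n_subsets[of "{1..K} - {y,y'}" c] by simp
qed

lemma count3:
  assumes "y' \<in> {1..K}" "y \<in> {1..K}" "y \<noteq> y'" "1 \<le> c"
  shows "card (compl_sets K c \<inter> {Y. y' \<notin> Y \<and> y \<in> Y}) = (K - 2 choose (c - 1))"
proof -
  have fin: "finite (compl_sets K c)" unfolding compl_sets_def
    by (rule finite_subset[of _ "Pow {1..K}"]) auto
  have "compl_sets K c \<inter> {Y. y' \<notin> Y} = (compl_sets K c \<inter> {Y. y' \<notin> Y \<and> y \<in> Y}) \<union> (compl_sets K c \<inter> {Y. y' \<notin> Y \<and> y \<notin> Y})"
    by auto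
  then have "card (compl_sets K c \<inter> {Y. y' \<notin> Y}) = card (compl_sets K c \<inter> {Y. y' \<notin> Y \<and> y \<in> Y}) + card (compl_sets K c \<inter> {Y. y' \<notin> Y \<and> y \<notin> Y})"
    using fin by (metis (no_types, lifting) card_Un_disjoint disjoint_iff finite_Int mem_Collect_eq Int_iff)
  moreover have "K \<ge> 2" using assms by auto
  then have "K - 1 = Suc (K - 2)" by simp
  moreover have "c = Suc (c - 1)" using assms by simp
  ultimately show ?thesis using count1[OF assms(1), of c] count2[OF assms(1-3), of c]
    by (metis binomial_Suc_Suc add_right_cancel)
qed

theorem theorem2:
  fixes X :: "'a::euclidean_space set"
    and p :: "'a \<Rightarrow> nat \<Rightarrow> real"
    and pbar :: "nat \<Rightarrow> 'a \<Rightarrow> nat set \<Rightarrow> real"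
    and l :: "real^'k \<Rightarrow> nat \<Rightarrow> real"
    and g :: "'a \<Rightarrow> real^'k"
    and \<gamma> :: real
    and \<alpha> :: "nat \<Rightarrow> real"
    and K :: nat
  defines "K \<equiv> CARD('k)"
  assumes K2: "K \<ge> 2"
    and X_meas: "X \<in> sets lborel"
    and p_nonneg: "\<And>x y. x \<in> X \<Longrightarrow> y \<in> {1..K} \<Longrightarrow> p x y \<ge> 0"
    and p_meas: "\<And>y. (\<lambda>x. p x y) \<in> borel_measurable lborel"
    and p_mass: "(\<Sum>y\<in>{1..K}. LINT x:X|lborel. p x y) = 1"
    and p_int: "\<And>y. set_integrable lborel X (\<lambda>x. p x y)"
    and pbar_def: "\<And>c x Y. c \<in> {1..K-1} \<Longrightarrow> x \<in> X \<Longrightarrow> Y \<in> compl_sets K c \<Longrightarrow>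
        pbar c x Y = (\<Sum>y\<in>{1..K} - Y. p x y) / real (K - 1 choose c)"
    and gamma: "0 \<le> \<gamma>" "\<gamma> \<le> 1"
    and alpha_nonneg: "\<And>c. c \<in> {1..K-1} \<Longrightarrow> \<alpha> c \<ge> 0"
    and alpha_sum: "(\<Sum>c\<in>{1..K-1}. \<alpha> c) = 1"
    and l_nonneg: "\<And>v y. l v y \<ge> 0"
    and lg_meas: "\<And>y. (\<lambda>x. l (g x) y) \<in> borel_measurable lborel"
    and finite_exp: "set_integrable lborel X (\<lambda>x. marginal K p x * cum_loss K l (g x))"
  shows "risk_MCUL X K p pbar \<gamma> \<alpha> l g = class_risk X K p l g"
  proof -
  define S where "S = (\<lambda>c. compl_sets K c)"
  have finS: "finite (S c)" for c unfolding S_def compl_sets_def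
    by (rule finite_subset[of _ "Pow {1..K}"]) auto
  define I where "I = (\<lambda>y' y. LINT x:X|lborel. p x y' * l (g x) y)"
  have int: "set_integrable lborel X (\<lambda>x. p x y' * l (g x) y)"
    if "y' \<in> {1..K}" "y \<in> {1..K}" for y' y
  proof (rule set_integrable_bound[OF finite_exp])
    show "set_borel_measurable lborel X (\<lambda>x. p x y' * l (g x) y)"
      unfolding set_borel_measurable_def using X_meas p_meas lg_meas
      by (intro borel_measurable_scaleR borel_measurable_indicator borel_measurable_times) auto
    have "norm (p x y' * l (g x) y) \<le> norm (marginal K p x * cum_loss K l (g x))" if "x \<in> X" for x
    proof -
      have a: "p x y' \<le> marginal K p x" unfolding marginal_def
        using that \<open>y' \<in> {1..K}\<close> p_nonneg by (intro member_le_sum) auto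
      have b: "l (g x) y \<le> cum_loss K l (g x)" unfolding cum_loss_def
        using \<open>y \<in> {1..K}\<close> l_nonneg by (intro member_le_sum) auto
      have c: "0 \<le> p x y'" using p_nonneg that \<open>y' \<in> {1..K}\<close> by auto
      have "p x y' * l (g x) y \<le> marginal K p x * cum_loss K l (g x)"
        using a b c l_nonneg by (intro mult_mono) auto
      moreover have "0 \<le> p x y' * l (g x) y" using c l_nonneg by auto
      ultimately show ?thesis by simp
    qed
    then show "AE x in lborel. x \<in> X \<longrightarrow> norm (p x y' * l (g x) y) \<le> norm (marginal K p x * cum_loss K l (g x))"
      by auto
  qed
  have dbl: "(LINT x:X|lborel. (\<Sum>y'\<in>{1..K}. \<Sum>y\<in>{1..K}. b y' y * (p x y' * l (g x) y)))
      = (\<Sum>y'\<in>{1..K}. \<Sum>y\<in>{1..K}. b y' y * I y' y)" for b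
  proof -
    have i1: "set_integrable lborel X (\<lambda>x. \<Sum>y\<in>{1..K}. b y' y * (p x y' * l (g x) y))
      \<and> (LINT x:X|lborel. (\<Sum>y\<in>{1..K}. b y' y * (p x y' * l (g x) y))) = (\<Sum>y\<in>{1..K}. b y' y * I y' y)"
      if "y' \<in> {1..K}" for y'
      using set_integral_sum_gen[of "{1..K}" lborel X "\<lambda>y x. b y' y * (p x y' * l (g x) y)"] int[OF that]
      unfolding I_def by simp
    show ?thesis
      using set_integral_sum_gen[of "{1..K}" lborel X "\<lambda>y' x. \<Sum>y\<in>{1..K}. b y' y * (p x y' * l (g x) y)"] i1
      by simp
  qed
  have marg: "exp_marg X K p (\<lambda>x. cum_loss K l (g x)) = (\<Sum>y'\<in>{1..K}. \<Sum>y\<in>{1..K}. 1 * I y' y)"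
  proof -
    have "exp_marg X K p (\<lambda>x. cum_loss K l (g x)) = (LINT x:X|lborel. (\<Sum>y'\<in>{1..K}. \<Sum>y\<in>{1..K}. 1 * (p x y' * l (g x) y)))"
      unfolding exp_marg_def marginal_def cum_loss_def by (simp add: sum_product)
    then show ?thesis using dbl[of "\<lambda>_ _. 1"] by simp
  qed
  have ru: "risk_u X K p pbar \<gamma> l g c = class_risk X K p l g" if c: "c \<in> {1..K-1}" for c
  proof -
    define r where "r = real (K - 1) / real c"
    define C where "C = real (K - 1 choose c)"
    have Cpos: "C > 0" unfolding C_def using c by auto
    define a :: "nat set \<Rightarrow> nat \<Rightarrow> nat \<Rightarrow> real" where "a = (\<lambda>Y y' y. (of_bool (y' \<notin> Y) * (1 - \<gamma>) - of_bool (y' \<notin> Y \<and> y \<in> Y) * r) / C)"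
    have pw: "pbar c x Y * ((1 - \<gamma>) * cum_loss K l (g x) - r * (\<Sum>y\<in>Y. l (g x) y))
        = (\<Sum>y'\<in>{1..K}. \<Sum>y\<in>{1..K}. a Y y' y * (p x y' * l (g x) y))"
      if x: "x \<in> X" and Y: "Y \<in> S c" for x Y
    proof -
      have YK: "Y \<subseteq> {1..K}" using Y unfolding S_def compl_sets_def by auto
      have e1: "(\<Sum>y\<in>{1..K}. a Y y' y * (p x y' * l (g x) y))
          = of_bool (y' \<notin> Y) * p x y' / C * ((1 - \<gamma>) * cum_loss K l (g x) - r * (\<Sum>y\<in>Y. l (g x) y))" for y'
      proof -
        have "(\<Sum>y\<in>{1..K}. a Y y' y * (p x y' * l (g x) y))
          = of_bool (y' \<notin> Y) * p x y' / C * ((1 - \<gamma>) * (\<Sum>y\<in>{1..K}. l (g x) y) - r * (\<Sum>y\<in>{1..K}. of_bool (y \<in> Y) * l (g x) y))"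
        proof (cases "y' \<in> Y")
          case True then show ?thesis unfolding a_def by simp
        next
          case False
          have "a Y y' y * (p x y' * l (g x) y) = p x y' / C * ((1 - \<gamma>) * l (g x) y - r * (of_bool (y \<in> Y) * l (g x) y))" for y
            unfolding a_def using False Cpos by (cases "y \<in> Y") (simp_all add: field_simps)
          then have "(\<Sum>y\<in>{1..K}. a Y y' y * (p x y' * l (g x) y)) = (\<Sum>y\<in>{1..K}. p x y' / C * ((1 - \<gamma>) * l (g x) y - r * (of_bool (y \<in> Y) * l (g x) y)))"
            by simp
          also have "\<dots> = p x y' / C * ((1 - \<gamma>) * (\<Sum>y\<in>{1..K}. l (g x) y) - r * (\<Sum>y\<in>{1..K}. of_bool (y \<in> Y) * l (g x) y))"
            by (simp only: sum_distrib_left[symmetric] sum_subtractf)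
          finally show ?thesis using False by simp
        qed
        also have "(\<Sum>y\<in>{1..K}. of_bool (y \<in> Y) * l (g x) y) = (\<Sum>y\<in>Y. l (g x) y)"
          using YK by (simp add: Int_absorb2 Int_commute)
        finally show ?thesis unfolding cum_loss_def by simp
      qed
      have "(\<Sum>y'\<in>{1..K}. \<Sum>y\<in>{1..K}. a Y y' y * (p x y' * l (g x) y))
          = (\<Sum>y'\<in>{1..K}. of_bool (y' \<notin> Y) * p x y') / C * ((1 - \<gamma>) * cum_loss K l (g x) - r * (\<Sum>y\<in>Y. l (g x) y))"
        by (simp only: e1 sum_distrib_right[symmetric] sum_divide_distrib[symmetric])
      also have "(\<Sum>y'\<in>{1..K}. of_bool (y' \<notin> Y) * p x y') = (\<Sum>y'\<in>{1..K} - Y. p x y')"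
        by (simp add: Diff_eq Compl_eq)
      finally show ?thesis using pbar_def[OF c x] Y unfolding S_def C_def by simp
    qed
    have sa: "(\<Sum>Y\<in>S c. a Y y' y) = (1 - \<gamma>) - of_bool (y \<noteq> y')"
      if "y' \<in> {1..K}" "y \<in> {1..K}" for y' y
    proof -
      have "(\<Sum>Y\<in>S c. a Y y' y) = ((1 - \<gamma>) * card (S c \<inter> {Y. y' \<notin> Y}) - r * card (S c \<inter> {Y. y' \<notin> Y \<and> y \<in> Y})) / C"
        unfolding a_def using finS[of c]
        by (simp add: sum_divide_distrib[symmetric] sum_subtractf sum_distrib_right[symmetric] mult.commute)
      also have "card (S c \<inter> {Y. y' \<notin> Y}) = C" unfolding S_def C_def using count1[OF that(1)] by simp
      finally have eq: "(\<Sum>Y\<in>S c. a Y y' y) = ((1 - \<gamma>) * C - r * card (S c \<inter> {Y. y' \<notin> Y \<and> y \<in> Y})) / C" .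
      show ?thesis
      proof (cases "y = y'")
        case True
        then have "S c \<inter> {Y. y' \<notin> Y \<and> y \<in> Y} = {}" by auto
        then show ?thesis using eq Cpos True by simp
      next
        case False
        have cc: "card (S c \<inter> {Y. y' \<notin> Y \<and> y \<in> Y}) = (K - 2 choose (c - 1))"
          unfolding S_def using count3[OF that(1,2) False] c by auto
        have K1: "K - 1 = Suc (K - 2)" and c1: "c = Suc (c - 1)" using K2 c by auto
        have "(K - 1) * (K - 2 choose (c - 1)) = (K - 1 choose c) * c"
          using Suc_times_binomial_eq[of "K - 2" "c - 1"] K1 c1 by metis
        then have "real (K - 1) * real (K - 2 choose (c - 1)) = C * real c"
          unfolding C_def by (metis of_nat_mult)
        then have "r * card (S c \<inter> {Y. y' \<notin> Y \<and> y \<in> Y}) = C"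
          unfolding r_def cc using c by (simp add: field_simps)
        then show ?thesis using eq Cpos False by (simp add: field_simps)
      qed
    qed
    have "exp_compl X K c (pbar c)
       (\<lambda>x Y. (1 - \<gamma>) * cum_loss K l (g x) - (real (K - 1) / real c) * (\<Sum>y\<in>Y. l (g x) y))
       = (\<Sum>Y\<in>S c. \<Sum>y'\<in>{1..K}. \<Sum>y\<in>{1..K}. a Y y' y * I y' y)"
      unfolding exp_compl_def S_def[symmetric] r_def[symmetric]
    proof (rule sum.cong[OF refl])
      fix Y assume Y: "Y \<in> S c"
      have "(LINT x:X|lborel. pbar c x Y * ((1 - \<gamma>) * cum_loss K l (g x) - r * (\<Sum>y\<in>Y. l (g x) y)))
        = (LINT x:X|lborel. (\<Sum>y'\<in>{1..K}. \<Sum>y\<in>{1..K}. a Y y' y * (p x y' * l (g x) y)))"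
        using pw[OF _ Y] X_meas by (intro set_lebesgue_integral_cong) auto
      then show "(LINT x:X|lborel. pbar c x Y * ((1 - \<gamma>) * cum_loss K l (g x) - r * (\<Sum>y\<in>Y. l (g x) y)))
        = (\<Sum>y'\<in>{1..K}. \<Sum>y\<in>{1..K}. a Y y' y * I y' y)" using dbl[of "a Y"] by simp
    qed
    also have "\<dots> = (\<Sum>y'\<in>{1..K}. \<Sum>y\<in>{1..K}. (\<Sum>Y\<in>S c. a Y y' y) * I y' y)"
      by (simp add: sum_distrib_right sum.swap[of _ "S c"] sum.swap[of _ "{1..K}" "S c"])
    also have "\<dots> = (\<Sum>y'\<in>{1..K}. \<Sum>y\<in>{1..K}. ((1 - \<gamma>) - of_bool (y \<noteq> y')) * I y' y)"
      using sa by (intro sum.cong refl) auto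
    finally have ec: "exp_compl X K c (pbar c)
       (\<lambda>x Y. (1 - \<gamma>) * cum_loss K l (g x) - (real (K - 1) / real c) * (\<Sum>y\<in>Y. l (g x) y))
       = (\<Sum>y'\<in>{1..K}. \<Sum>y\<in>{1..K}. ((1 - \<gamma>) - of_bool (y \<noteq> y')) * I y' y)" .
    have "risk_u X K p pbar \<gamma> l g c = (\<Sum>y'\<in>{1..K}. \<Sum>y\<in>{1..K}. of_bool (y = y') * I y' y)"
      unfolding risk_u_def ec marg
      by (simp add: sum_distrib_left sum.distrib[symmetric] algebra_simps of_bool_def)
        (intro sum.cong refl, auto)
    also have "\<dots> = (\<Sum>y\<in>{1..K}. I y y)"
    proof (rule sum.cong[OF refl])
      fix y' :: nat assume "y' \<in> {1..K}"
      then have "{1..K} \<inter> {y. y = y'} = {y'}" by auto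
      then show "(\<Sum>y\<in>{1..K}. of_bool (y = y') * I y' y) = I y' y'" by simp
    qed
    finally show ?thesis unfolding class_risk_def exp_joint_def I_def .
  qed
  have "risk_MCUL X K p pbar \<gamma> \<alpha> l g = (\<Sum>c\<in>{1..K-1}. \<alpha> c * class_risk X K p l g)"
    unfolding risk_MCUL_def using ru by simp
  also have "\<dots> = class_risk X K p l g" using alpha_sum by (simp add: sum_distrib_right[symmetric])
  finally show ?thesis .
qed

end
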